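(* Let $q\ge2$ and let $U_C$ be the operator on $\mathbb{C}^q\otimes\mathbb{C}^q$ with matrix elements $$\langle k\alpha|U_C|j\beta\rangle=\frac1q\exp\!\Bigl(-\frac{2\pi i}{q}\bigl[k\alpha+2j\beta-(k\beta+j\alpha)\bigr]\Bigr),\qquad k,\alpha,j,\beta\in\{0,\dots,q-1\}.$$ Then $U_C$ is unitary and dual-unitary for every $q$. If $q$ is odd, $U_C$ is 2-unitary, so $e_p(U_C)=1$ and all nontrivial eigenvalues of $\mathcal{M}_\pm^{U_C}$ vanish. If $q$ is even, $U_C$ is not 2-unitary and $e_p(U_C)=\frac{q^2-2}{q^2-1}$.
   Context: Product basis $|i\alpha\rangle$ of $\mathbb{C}^q\otimes\mathbb{C}^q$. Realignment $\langle\beta\alpha|X^{R_1}|ji\rangle=\langle i\alpha|X|j\beta\rangle$, partial transpose $\langle i\beta|X^{T_2}|j\alpha\rangle=\langle i\alpha|X|j\beta\rangle$. A unitary $U$ is dual-unitary if $U^{R_1}$ is unitary and 2-unitary if both $U^{R_1}$ and $U^{T_2}$ are unitary. $S$ is the swap. $E(U)=1-q^{-4}\operatorname{tr}[(U^{R_1}U^{R_1\dagger})^2]$, $E(S)=1-1/q^2$, $e_p(U)=\frac{E(U)+E(US)-E(S)}{E(S)}$. $\mathcal{M}_+^U(a)=\frac1q\operatorname{tr}_1[U^\dagger(a\otimes I)U]$, $\mathcal{M}_-^U(a)=\frac1q\operatorname{tr}_2[U^\dagger(I\otimes a)U]$ on $q\times q$ matrices; their nontrivial eigenvalues are the eigenvalues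 of their restrictions to traceless matrices. *)

theory Defs
  imports "Jordan_Normal_Form.Schur_Decomposition"
begin

text \<open>Operators on C^q (x) C^q are complex (q*q) x (q*q) matrices; the product basis
  vector |i alpha> (i, alpha < q) corresponds to the index i*q + alpha.\<close>

definition mtrace :: "complex mat \<Rightarrow> complex" where
  "mtrace A = (\<Sum>i<dim_row A. A $$ (i, i))"

definition unitary_mat :: "nat \<Rightarrow> complex mat \<Rightarrow> bool" where
  "unitary_mat n U \<longleftrightarrow> U \<in> carrier_mat n n \<and> mat_adjoint U * U = 1\<^sub>m n \<and> U * mat_adjoint U = 1\<^sub>m n"

text \<open>Realignment: <beta alpha| X^R | j i> = <i alpha| X | j beta>.\<close>
definition realign :: "nat \<Rightarrow> complex mat \<Rightarrow> complex mat" where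
  "realign q X = mat (q*q) (q*q)
     (\<lambda>(r, c). X $$ ((c mod q) * q + r mod q, (c div q) * q + r div q))"

text \<open>Partial transpose: <i beta| X^T2 | j alpha> = <i alpha| X | j beta>.\<close>
definition ptrans :: "nat \<Rightarrow> complex mat \<Rightarrow> complex mat" where
  "ptrans q X = mat (q*q) (q*q)
     (\<lambda>(r, c). X $$ ((r div q) * q + c mod q, (c div q) * q + r mod q))"

definition dual_unitary :: "nat \<Rightarrow> complex mat \<Rightarrow> bool" where
  "dual_unitary q U \<longleftrightarrow> unitary_mat (q*q) U \<and> unitary_mat (q*q) (realign q U)"

definition two_unitary :: "nat \<Rightarrow> complex mat \<Rightarrow> bool" where
  "two_unitary q U \<longleftrightarrow> unitary_mat (q*q) U \<and> unitary_mat (q*q) (realign q U)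
                        \<and> unitary_mat (q*q) (ptrans q U)"

text \<open>Swap: S |i alpha> = |alpha i>.\<close>
definition swap :: "nat \<Rightarrow> complex mat" where
  "swap q = mat (q*q) (q*q) (\<lambda>(r, c). if c = (r mod q) * q + r div q then 1 else 0)"

definition ent_power :: "nat \<Rightarrow> complex mat \<Rightarrow> complex" where
  "ent_power q U = (let R = realign q U in
      1 - mtrace ((R * mat_adjoint R) * (R * mat_adjoint R)) / (of_nat q) ^ 4)"

definition ent_power_swap :: "nat \<Rightarrow> complex" where
  "ent_power_swap q = 1 - 1 / (of_nat q) ^ 2"

definition ep :: "nat \<Rightarrow> complex mat \<Rightarrow> complex" where
  "ep q U = (ent_power q U + ent_power q (U * swap q) - ent_power_swap q) / ent_power_swap q"

text \<open>a (x) I and I (x) a.\<close>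
definition kron_left :: "nat \<Rightarrow> complex mat \<Rightarrow> complex mat" where
  "kron_left q a = mat (q*q) (q*q)
     (\<lambda>(r, c). if r mod q = c mod q then a $$ (r div q, c div q) else 0)"

definition kron_right :: "nat \<Rightarrow> complex mat \<Rightarrow> complex mat" where
  "kron_right q a = mat (q*q) (q*q)
     (\<lambda>(r, c). if r div q = c div q then a $$ (r mod q, c mod q) else 0)"

definition ptrace1 :: "nat \<Rightarrow> complex mat \<Rightarrow> complex mat" where
  "ptrace1 q X = mat q q (\<lambda>(a, b). \<Sum>i<q. X $$ (i * q + a, i * q + b))"

definition ptrace2 :: "nat \<Rightarrow> complex mat \<Rightarrow> complex mat" where
  "ptrace2 q X = mat q q (\<lambda>(i, j). \<Sum>a<q. X $$ (i * q + a, j * q + a))"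

definition Mplus :: "nat \<Rightarrow> complex mat \<Rightarrow> complex mat \<Rightarrow> complex mat" where
  "Mplus q U a = (1 / of_nat q) \<cdot>\<^sub>m ptrace1 q (mat_adjoint U * kron_left q a * U)"

definition Mminus :: "nat \<Rightarrow> complex mat \<Rightarrow> complex mat \<Rightarrow> complex mat" where
  "Mminus q U a = (1 / of_nat q) \<cdot>\<^sub>m ptrace2 q (mat_adjoint U * kron_right q a * U)"

definition nontrivial_eigenvalue ::
  "nat \<Rightarrow> (complex mat \<Rightarrow> complex mat) \<Rightarrow> complex \<Rightarrow> bool" where
  "nontrivial_eigenvalue q M l \<longleftrightarrow>
     (\<exists>a \<in> carrier_mat q q. a \<noteq> 0\<^sub>m q q \<and> mtrace a = 0 \<and> M a = l \<cdot>\<^sub>m a)"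

definition UC :: "nat \<Rightarrow> complex mat" where
  "UC q = mat (q*q) (q*q) (\<lambda>(r, c).
     let k = int (r div q); \<alpha> = int (r mod q); j = int (c div q); \<beta> = int (c mod q) in
     (1 / of_nat q) * exp (- (2 * of_real pi * \<i> / of_nat q)
                          * of_int (k * \<alpha> + 2 * j * \<beta> - (k * \<beta> + j * \<alpha>))))"

end

theory Submission
  imports Defs
begin

definition ee :: "nat \<Rightarrow> int \<Rightarrow> complex" where
  "ee q n = exp (- (2 * of_real pi * \<i> / of_nat q) * of_int n)"

lemma ee_cis: "ee q n = cis (- 2 * pi * of_int n / q)"
  unfolding ee_def cis_conv_exp by (simp add: field_simps)

lemma ee_add: "ee q (a + b) = ee q a * ee q b"
  unfolding ee_cis cis_mult by (cases "q = 0") (simp_all add: field_simps)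

lemma ee_0[simp]: "ee q 0 = 1" unfolding ee_def by simp

lemma ee_cnj: "cnj (ee q a) = ee q (- a)"
  unfolding ee_cis cis_cnj by simp

lemma ee_cnj_mult: "cnj (ee q a) * ee q b = ee q (b - a)"
  by (simp add: ee_cnj ee_add[symmetric])

lemma ee_dvd: assumes "q > 0" "int q dvd n" shows "ee q n = 1"
proof -
  obtain m where m: "n = int q * m" using assms by auto
  have "ee q n = cis (2 * pi * real_of_int (- m))"
    unfolding ee_cis m using assms by (simp add: field_simps)
  also have "\<dots> = 1" by (rule cis_multiple_2pi) simp
  finally show ?thesis .
qed

lemma ee_one_iff: assumes "q > 0" shows "ee q n = 1 \<longleftrightarrow> int q dvd n"
proof
  assume h: "ee q n = 1"
  hence "cos (- 2 * pi * of_int n / q) = 1" unfolding ee_cis by (simp add: complex_eq_iff)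
  then obtain m :: int where "- 2 * pi * of_int n / q = of_int m * 2 * pi" using cos_one_2pi_int by blast
  hence "pi * (real_of_int n + of_int m * q) = 0" using assms by (simp add: field_simps)
  hence "real_of_int n = - m * q" by (simp add: eq_neg_iff_add_eq_0)
  hence "n = - m * q" by (metis of_int_eq_iff of_int_minus of_int_mult of_int_of_nat_eq)
  thus "int q dvd n" by simp
qed (use ee_dvd assms in auto)

lemma ee_pow: "ee q n ^ k = ee q (n * int k)"
  by (induction k) (auto simp: ee_add algebra_simps)

lemma char_sum: assumes "q > 0"
  shows "(\<Sum>x<q. ee q (int x * A)) = (if int q dvd A then of_nat q else 0)"
proof (cases "int q dvd A")
  case True
  then show ?thesis using ee_dvd[OF assms] by simp
next
  case False
  have "(\<Sum>x<q. ee q (int x * A)) = (\<Sum>x<q. ee q A ^ x)" by (simp add: ee_pow mult.commute)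
  also have "\<dots> = (ee q A ^ q - 1) / (ee q A - 1)"
    using False ee_one_iff[OF assms] by (intro geometric_sum) auto
  also have "ee q A ^ q = 1" using ee_pow ee_dvd[OF assms] by simp
  finally show ?thesis using False by simp
qed

lemma dsum: assumes "q > 0" "\<And>k a. F k a = P + int k * A + int a * B"
  shows "(\<Sum>k<q. \<Sum>a<q. ee q (F k a)) = ee q P * (if int q dvd A then of_nat q else 0) * (if int q dvd B then of_nat q else 0)"
proof -
  have "(\<Sum>k<q. \<Sum>a<q. ee q (F k a)) = (\<Sum>k<q. \<Sum>a<q. ee q P * ee q (int k * A) * ee q (int a * B))"
    by (simp add: assms(2) ee_add)
  also have "\<dots> = ee q P * (\<Sum>k<q. \<Sum>a<q. ee q (int k * A) * ee q (int a * B))"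
    by (simp add: sum_distrib_left mult.assoc)
  also have "\<dots> = ee q P * ((\<Sum>k<q. ee q (int k * A)) * (\<Sum>a<q. ee q (int a * B)))"
    by (simp only: sum_product)
  finally show ?thesis using char_sum[OF assms(1)] by simp
qed

lemma sum_split: "(\<Sum>r<(m::nat)*q. f r) = (\<Sum>k<m. \<Sum>a<q. f (k*q+a))"
proof -
  have "(\<Sum>r<m*q. f r) = (\<Sum>k<m. sum f {k*q..<k*q+q})" using sum.nat_group[where g=f and k=q and n=m] by simp
  also have "\<dots> = (\<Sum>k<m. \<Sum>a<q. f (k*q+a))"
  proof (rule sum.cong[OF refl])
    fix k
    show "sum f {k*q..<k*q+q} = (\<Sum>a<q. f (k*q+a))"
      using sum.shift_bounds_nat_ivl[of f 0 "k*q" q] by (simp add: atLeast0LessThan add.commute)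
  qed
  finally show ?thesis .
qed

lemma idx_div[simp]: "a < (q::nat) \<Longrightarrow> (k*q+a) div q = k" by simp
lemma idx_mod[simp]: "a < (q::nat) \<Longrightarrow> (k*q+a) mod q = a" by simp
lemma idx_lt[simp]: "a < (q::nat) \<Longrightarrow> k < q \<Longrightarrow> k*q+a < q*q"
proof -
  assume "a < q" "k < q"
  hence "k*q+a < k*q+q" by simp
  also have "k*q+q = (k+1)*q" by simp
  also have "(k+1)*q \<le> q*q" using \<open>k<q\<close> by (intro mult_le_mono1) simp
  finally show ?thesis .
qed
lemma idx_eq[simp]: "a < (q::nat) \<Longrightarrow> b < q \<Longrightarrow> (k*q+a = j*q+b) \<longleftrightarrow> k = j \<and> a = b"
  by (metis idx_div idx_mod)

lemma mat_eq_idx: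
  assumes "A \<in> carrier_mat (q*q) (q*q)" "B \<in> carrier_mat (q*q) (q*q)"
    "\<And>j b j' b'. j<q \<Longrightarrow> b<q \<Longrightarrow> j'<q \<Longrightarrow> b'<q \<Longrightarrow> A$$(j*q+b, j'*q+b') = B$$(j*q+b,j'*q+b')"
  shows "A = B"
proof (rule eq_matI)
  fix r c assume "r < dim_row B" "c < dim_col B"
  hence r: "r < q*q" and c: "c < q*q" using assms by auto
  hence q: "q > 0" by (cases q) auto
  have "r div q < q" "c div q < q" using r c by (auto simp: less_mult_imp_div_less)
  moreover have "r mod q < q" "c mod q < q" using q by auto
  ultimately have "A$$((r div q)*q + r mod q, (c div q)*q + c mod q) = B$$((r div q)*q + r mod q, (c div q)*q + c mod q)"
    using assms(3) by blast
  then show "A $$ (r, c) = B $$ (r, c)" by simp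
qed (use assms in auto)

lemma adj_idx[simp]: "i < dim_col A \<Longrightarrow> j < dim_row A \<Longrightarrow> mat_adjoint A $$ (i,j) = cnj (A $$ (j,i))"
  "dim_row (mat_adjoint A) = dim_col A" "dim_col (mat_adjoint A) = dim_row A"
  by (auto simp: mat_adjoint_def mat_of_rows_def)

lemma adj_carrier: fixes A :: "complex mat" assumes "A \<in> carrier_mat n m" shows "mat_adjoint A \<in> carrier_mat m n"
proof (rule carrier_matI)
  show "dim_row (mat_adjoint A) = m" using carrier_matD(2)[OF assms] by (simp only: adj_idx)
  show "dim_col (mat_adjoint A) = n" using carrier_matD(1)[OF assms] by (simp only: adj_idx)
qed

lemma mult_idx_split:
  assumes "A \<in> carrier_mat (q*q) (q*q)" "B \<in> carrier_mat (q*q) (q*q)" "r < q*q" "c < q*q"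
  shows "(A * B) $$ (r, c) = (\<Sum>k<q. \<Sum>a<q. A$$(r, k*q+a) * B$$(k*q+a, c))"
proof -
  have dA: "dim_row A = q*q" "dim_col A = q*q" using assms(1) using carrier_matD by blast+
  have dB: "dim_row B = q*q" "dim_col B = q*q" using assms(2) using carrier_matD by blast+
  have "(A * B) $$ (r, c) = row A r \<bullet> col B c"
    by (rule index_mult_mat(1)) (simp_all only: dA dB assms(3,4))
  also have "\<dots> = (\<Sum>s\<in>{0..<q*q}. row A r $ s * col B c $ s)"
    unfolding scalar_prod_def by (simp only: dim_col dB)
  also have "\<dots> = (\<Sum>s<q*q. A$$(r, s) * B$$(s, c))"
    unfolding atLeast0LessThan
  proof (rule sum.cong[OF refl])
    fix s assume "s \<in> {..<q*q}"
    hence "s < q*q" by simp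
    thus "row A r $ s * col B c $ s = A$$(r, s) * B$$(s, c)"
      using dA dB assms(3,4) by (simp only: index_row index_col)
  qed
  also have "\<dots> = (\<Sum>k<q. \<Sum>a<q. A$$(r, k*q+a) * B$$(k*q+a, c))" by (rule sum_split)
  finally show ?thesis .
qed

lemma adj_mult_idx:
  assumes "A \<in> carrier_mat (q*q) (q*q)" "B \<in> carrier_mat (q*q) (q*q)" "j<q" "b<q" "j'<q" "b'<q"
  shows "(mat_adjoint A * B) $$ (j*q+b, j'*q+b') = (\<Sum>k<q. \<Sum>a<q. cnj (A$$(k*q+a, j*q+b)) * B$$(k*q+a, j'*q+b'))"
proof -
  have AD: "mat_adjoint A \<in> carrier_mat (q*q) (q*q)" by (rule adj_carrier[OF assms(1)])
  have "(mat_adjoint A * B) $$ (j*q+b, j'*q+b') = (\<Sum>k<q. \<Sum>a<q. mat_adjoint A $$ (j*q+b, k*q+a) * B$$(k*q+a, j'*q+b'))"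
    by (rule mult_idx_split[OF AD assms(2)]) (use assms idx_lt in blast)+
  also have "\<dots> = (\<Sum>k<q. \<Sum>a<q. cnj (A$$(k*q+a, j*q+b)) * B$$(k*q+a, j'*q+b'))"
  proof (intro sum.cong refl)
    fix k a assume "k \<in> {..<q}" "a \<in> {..<q}"
    hence "k*q+a < dim_row A" "j*q+b < dim_col A" using assms(1,3,4) idx_lt by auto
    thus "mat_adjoint A $$ (j*q+b, k*q+a) * B$$(k*q+a, j'*q+b') = cnj (A$$(k*q+a, j*q+b)) * B$$(k*q+a, j'*q+b')"
      by (simp only: adj_idx)
  qed
  finally show ?thesis .
qed

lemma mult_adj_idx:
  assumes "A \<in> carrier_mat (q*q) (q*q)" "B \<in> carrier_mat (q*q) (q*q)" "j<q" "b<q" "j'<q" "b'<q"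
  shows "(A * mat_adjoint B) $$ (j*q+b, j'*q+b') = (\<Sum>k<q. \<Sum>a<q. A$$(j*q+b, k*q+a) * cnj (B$$(j'*q+b', k*q+a)))"
proof -
  have AD: "mat_adjoint B \<in> carrier_mat (q*q) (q*q)" by (rule adj_carrier[OF assms(2)])
  have "(A * mat_adjoint B) $$ (j*q+b, j'*q+b') = (\<Sum>k<q. \<Sum>a<q. A $$ (j*q+b, k*q+a) * mat_adjoint B$$(k*q+a, j'*q+b'))"
    by (rule mult_idx_split[OF assms(1) AD]) (use assms idx_lt in blast)+
  also have "\<dots> = (\<Sum>k<q. \<Sum>a<q. A$$(j*q+b, k*q+a) * cnj (B$$(j'*q+b', k*q+a)))"
  proof (intro sum.cong refl)
    fix k a assume "k \<in> {..<q}" "a \<in> {..<q}"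
    hence "j'*q+b' < dim_row B" "k*q+a < dim_col B" using assms(2,5,6) idx_lt by auto
    thus "A $$ (j*q+b, k*q+a) * mat_adjoint B$$(k*q+a, j'*q+b') = A$$(j*q+b, k*q+a) * cnj (B$$(j'*q+b', k*q+a))"
      by (simp only: adj_idx)
  qed
  finally show ?thesis .
qed

lemma UC_carrier: "UC q \<in> carrier_mat (q*q) (q*q)" by (simp add: UC_def)

lemma UC_idx: "k<q \<Longrightarrow> a<q \<Longrightarrow> j<q \<Longrightarrow> b<q \<Longrightarrow>
  UC q $$ (k*q+a, j*q+b) = (1 / of_nat q) * ee q (int k * int a + 2 * int j * int b - (int k * int b + int j * int a))"
  by (simp add: UC_def ee_def Let_def)

lemma realign_carrier: "realign q X \<in> carrier_mat (q*q) (q*q)" by (simp add: realign_def)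
lemma ptrans_carrier: "ptrans q X \<in> carrier_mat (q*q) (q*q)" by (simp add: ptrans_def)

lemma realign_idx: "i<q \<Longrightarrow> a<q \<Longrightarrow> j<q \<Longrightarrow> b<q \<Longrightarrow>
  realign q X $$ (b*q+a, j*q+i) = X $$ (i*q+a, j*q+b)"
  by (simp add: realign_def)

lemma ptrans_idx: "i<q \<Longrightarrow> a<q \<Longrightarrow> j<q \<Longrightarrow> b<q \<Longrightarrow>
  ptrans q X $$ (i*q+b, j*q+a) = X $$ (i*q+a, j*q+b)"
  by (simp add: ptrans_def)

lemma dvd_small: "b < q \<Longrightarrow> b' < q \<Longrightarrow> int q dvd (int b - int b') \<longleftrightarrow> b = b'"
proof
  assume h: "b < q" "b' < q" "int q dvd (int b - int b')"
  hence "int b mod int q = int b' mod int q" using mod_eq_dvd_iff by blast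
  thus "b = b'" using h(1,2) by simp
qed simp

lemma key_sum: assumes "q > 0" "\<And>k a. F k a = P + int k * A + int a * B"
  shows "(\<Sum>k<q. \<Sum>a<q. (1/of_nat q) * ((1/of_nat q) * ee q (F k a))) = (if int q dvd A \<and> int q dvd B then ee q P else 0)"
proof -
  have "(\<Sum>k<q. \<Sum>a<q. (1/of_nat q) * ((1/of_nat q) * ee q (F k a))) = (1/of_nat q) * ((1/of_nat q) * (\<Sum>k<q. \<Sum>a<q. ee q (F k a)))"
    by (simp add: sum_distrib_left)
  also have "\<dots> = (1/of_nat q) * ((1/of_nat q) * (ee q P * (if int q dvd A then of_nat q else 0) * (if int q dvd B then of_nat q else 0)))"
    by (simp add: dsum[OF assms])
  finally show ?thesis using assms(1) by simp
qed

lemma pair1: "cnj ((1/of_nat q) * ee q x) * ((1/of_nat q) * ee q y) = (1/of_nat q) * ((1/of_nat q) * ee q (y - x))"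
  by (simp add: ee_cnj_mult[symmetric])
lemma pair2: "((1/of_nat q) * ee q x) * cnj ((1/of_nat q) * ee q y) = (1/of_nat q) * ((1/of_nat q) * ee q (x - y))"
  by (simp add: ee_cnj_mult[symmetric] mult.commute)

lemma U_unitary1: assumes "q > 0" shows "mat_adjoint (UC q) * UC q = 1\<^sub>m (q*q)"
proof (rule mat_eq_idx[of _ q])
  fix j b j' b' assume h: "j<q" "b<q" "j'<q" "(b'::nat)<q"
  have "(mat_adjoint (UC q) * UC q) $$ (j*q+b, j'*q+b') =
     (\<Sum>k<q. \<Sum>a<q. cnj (UC q$$(k*q+a, j*q+b)) * UC q$$(k*q+a, j'*q+b'))"
    using h by (simp add: adj_mult_idx UC_carrier)
  also have "\<dots> = (\<Sum>k<q. \<Sum>a<q. (1/of_nat q) * ((1/of_nat q) * ee q (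
       (int k * int a + 2 * int j' * int b' - (int k * int b' + int j' * int a)) -
       (int k * int a + 2 * int j * int b - (int k * int b + int j * int a)))))"
    using h by (intro sum.cong refl) (simp only: lessThan_iff UC_idx h pair1)
  also have "\<dots> = (if int q dvd (int b - int b') \<and> int q dvd (int j - int j') then ee q (2 * int j' * int b' - 2 * int j * int b) else 0)"
    by (rule key_sum[OF assms]) (simp add: algebra_simps)
  also have "\<dots> = 1\<^sub>m (q*q) $$ (j*q+b, j'*q+b')"
    using h assms by (auto simp: dvd_small)
  finally show "(mat_adjoint (UC q) * UC q) $$ (j*q+b, j'*q+b') = 1\<^sub>m (q*q) $$ (j*q+b, j'*q+b')" .
qed (rule mult_carrier_mat adj_carrier UC_carrier one_carrier_mat)+

lemma U_unitary2: assumes "q > 0" shows "UC q * mat_adjoint (UC q) = 1\<^sub>m (q*q)"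
proof (rule mat_eq_idx[of _ q])
  fix j b j' b' assume h: "j<q" "b<q" "j'<q" "(b'::nat)<q"
  have "(UC q * mat_adjoint (UC q)) $$ (j*q+b, j'*q+b') =
     (\<Sum>k<q. \<Sum>a<q. UC q$$(j*q+b, k*q+a) * cnj (UC q$$(j'*q+b', k*q+a)))"
    using h by (simp add: mult_adj_idx UC_carrier)
  also have "\<dots> = (\<Sum>k<q. \<Sum>a<q. (1/of_nat q) * ((1/of_nat q) * ee q (
       (int j * int b + 2 * int k * int a - (int j * int a + int k * int b)) -
       (int j' * int b' + 2 * int k * int a - (int j' * int a + int k * int b')))))"
    using h by (intro sum.cong refl) (simp only: lessThan_iff UC_idx h pair2)
  also have "\<dots> = (if int q dvd (int b' - int b) \<and> int q dvd (int j' - int j) then ee q (int j * int b - int j' * int b') else 0)"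
    by (rule key_sum[OF assms]) (simp add: algebra_simps)
  also have "\<dots> = 1\<^sub>m (q*q) $$ (j*q+b, j'*q+b')"
    using h assms by (auto simp: dvd_small)
  finally show "(UC q * mat_adjoint (UC q)) $$ (j*q+b, j'*q+b') = 1\<^sub>m (q*q) $$ (j*q+b, j'*q+b')" .
qed (rule mult_carrier_mat adj_carrier UC_carrier one_carrier_mat)+

lemma dvd_pair:
  assumes "j<q" "j'<q" "i<q" "(i'::nat)<q"
  shows "(int q dvd (2*(int j' - int j) - (int i' - int i)) \<and> int q dvd ((int i' - int i) - (int j' - int j)))
         \<longleftrightarrow> j = j' \<and> i = i'"
proof
  assume h: "int q dvd (2*(int j' - int j) - (int i' - int i)) \<and> int q dvd ((int i' - int i) - (int j' - int j))"
  hence "int q dvd ((2*(int j' - int j) - (int i' - int i)) + ((int i' - int i) - (int j' - int j)))"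
    by (intro dvd_add) auto
  hence "int q dvd (int j' - int j)" by simp
  hence jj: "j' = j" using dvd_small assms by blast
  with h have "int q dvd (int i' - int i)" by simp
  hence "i' = i" using dvd_small assms by blast
  with jj show "j = j' \<and> i = i'" by simp
qed simp

lemma R_idx: "k<q \<Longrightarrow> a<q \<Longrightarrow> j<q \<Longrightarrow> i<q \<Longrightarrow>
  realign q (UC q) $$ (k*q+a, j*q+i) = (1 / of_nat q) * ee q (int i * int a + 2 * int j * int k - (int i * int k + int j * int a))"
  by (simp only: realign_idx UC_idx)

lemma T_idx: "i<q \<Longrightarrow> b<q \<Longrightarrow> j<q \<Longrightarrow> a<q \<Longrightarrow>
  ptrans q (UC q) $$ (i*q+b, j*q+a) = (1 / of_nat q) * ee q (int i * int a + 2 * int j * int b - (int i * int b + int j * int a))"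
  by (simp only: ptrans_idx UC_idx)

lemma R_unitary1: assumes "q > 0" shows "mat_adjoint (realign q (UC q)) * realign q (UC q) = 1\<^sub>m (q*q)"
proof (rule mat_eq_idx[of _ q])
  fix j i j' i' assume h: "j<q" "i<q" "j'<q" "(i'::nat)<q"
  have "(mat_adjoint (realign q (UC q)) * realign q (UC q)) $$ (j*q+i, j'*q+i') =
     (\<Sum>k<q. \<Sum>a<q. cnj (realign q (UC q)$$(k*q+a, j*q+i)) * realign q (UC q)$$(k*q+a, j'*q+i'))"
    using h by (simp add: adj_mult_idx realign_carrier)
  also have "\<dots> = (\<Sum>k<q. \<Sum>a<q. (1/of_nat q) * ((1/of_nat q) * ee q (
       (int i' * int a + 2 * int j' * int k - (int i' * int k + int j' * int a)) -
       (int i * int a + 2 * int j * int k - (int i * int k + int j * int a)))))"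
    using h by (intro sum.cong refl) (simp only: lessThan_iff R_idx h pair1)
  also have "\<dots> = (if int q dvd (2*(int j' - int j) - (int i' - int i)) \<and> int q dvd ((int i' - int i) - (int j' - int j)) then ee q 0 else 0)"
    by (rule key_sum[OF assms]) (simp add: algebra_simps)
  also have "\<dots> = 1\<^sub>m (q*q) $$ (j*q+i, j'*q+i')"
    using h assms dvd_pair[of j q j' i i'] by auto
  finally show "(mat_adjoint (realign q (UC q)) * realign q (UC q)) $$ (j*q+i, j'*q+i') = 1\<^sub>m (q*q) $$ (j*q+i, j'*q+i')" .
qed (rule mult_carrier_mat adj_carrier realign_carrier one_carrier_mat)+

lemma R_unitary2: assumes "q > 0" shows "realign q (UC q) * mat_adjoint (realign q (UC q)) = 1\<^sub>m (q*q)"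
proof (rule mat_eq_idx[of _ q])
  fix b a b' a' assume h: "b<q" "a<q" "b'<q" "(a'::nat)<q"
  have "(realign q (UC q) * mat_adjoint (realign q (UC q))) $$ (b*q+a, b'*q+a') =
     (\<Sum>k<q. \<Sum>x<q. realign q (UC q)$$(b*q+a, k*q+x) * cnj (realign q (UC q)$$(b'*q+a', k*q+x)))"
    using h by (simp add: mult_adj_idx realign_carrier)
  also have "\<dots> = (\<Sum>k<q. \<Sum>x<q. (1/of_nat q) * ((1/of_nat q) * ee q (
       (int x * int a + 2 * int k * int b - (int x * int b + int k * int a)) -
       (int x * int a' + 2 * int k * int b' - (int x * int b' + int k * int a')))))"
    using h by (intro sum.cong refl) (simp only: lessThan_iff R_idx h pair2)
  also have "\<dots> = (if int q dvd (2*(int b - int b') - (int a - int a')) \<and> int q dvd ((int a - int a') - (int b - int b')) then ee q 0 else 0)"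
    by (rule key_sum[OF assms]) (simp add: algebra_simps)
  also have "\<dots> = 1\<^sub>m (q*q) $$ (b*q+a, b'*q+a')"
    using h assms dvd_pair[of b' q b a' a] by auto
  finally show "(realign q (UC q) * mat_adjoint (realign q (UC q))) $$ (b*q+a, b'*q+a') = 1\<^sub>m (q*q) $$ (b*q+a, b'*q+a')" .
qed (rule mult_carrier_mat adj_carrier realign_carrier one_carrier_mat)+

lemma odd_dvd2: assumes "odd q" shows "int q dvd (2 * x) \<longleftrightarrow> int q dvd x"
proof
  assume "int q dvd 2 * x"
  moreover have "coprime (int q) 2" using assms by simp
  ultimately show "int q dvd x" using coprime_dvd_mult_right_iff by blast
qed simp

lemma odd_dvd_small: assumes "odd q" "b<q" "b'<q" shows "int q dvd (2 * int b - 2 * int b') \<longleftrightarrow> b = b'"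
proof -
  have "int q dvd (2 * int b - 2 * int b') \<longleftrightarrow> int q dvd (2 * (int b - int b'))" by (simp add: algebra_simps)
  also have "\<dots> \<longleftrightarrow> int q dvd (int b - int b')" by (rule odd_dvd2[OF assms(1)])
  also have "\<dots> \<longleftrightarrow> b = b'" by (rule dvd_small[OF assms(2,3)])
  finally show ?thesis .
qed

lemma T_gram: assumes "q > 0" "j<q" "a<q" "j'<q" "(a'::nat)<q"
  shows "(mat_adjoint (ptrans q (UC q)) * ptrans q (UC q)) $$ (j*q+a, j'*q+a') =
    (if int q dvd (int a' - int a) \<and> int q dvd (2 * (int j' - int j)) then ee q (int j * int a - int j' * int a') else 0)"
proof -
  note h = assms(2-5)
  have "(mat_adjoint (ptrans q (UC q)) * ptrans q (UC q)) $$ (j*q+a, j'*q+a') =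
     (\<Sum>k<q. \<Sum>x<q. cnj (ptrans q (UC q)$$(k*q+x, j*q+a)) * ptrans q (UC q)$$(k*q+x, j'*q+a'))"
    using h by (simp add: adj_mult_idx ptrans_carrier)
  also have "\<dots> = (\<Sum>k<q. \<Sum>x<q. (1/of_nat q) * ((1/of_nat q) * ee q (
       (int k * int a' + 2 * int j' * int x - (int k * int x + int j' * int a')) -
       (int k * int a + 2 * int j * int x - (int k * int x + int j * int a)))))"
    using h by (intro sum.cong refl) (simp only: lessThan_iff T_idx h pair1)
  also have "\<dots> = (if int q dvd (int a' - int a) \<and> int q dvd (2 * (int j' - int j)) then ee q (int j * int a - int j' * int a') else 0)"
    by (rule key_sum[OF assms(1)]) (simp add: algebra_simps)
  finally show ?thesis .
qed

lemma T_unitary1: assumes "q > 0" "odd q" shows "mat_adjoint (ptrans q (UC q)) * ptrans q (UC q) = 1\<^sub>m (q*q)"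
proof (rule mat_eq_idx[of _ q])
  fix j a j' a' assume h: "j<q" "a<q" "j'<q" "(a'::nat)<q"
  show "(mat_adjoint (ptrans q (UC q)) * ptrans q (UC q)) $$ (j*q+a, j'*q+a') = 1\<^sub>m (q*q) $$ (j*q+a, j'*q+a')"
    unfolding T_gram[OF assms(1) h] using h assms by (auto simp: odd_dvd_small dvd_small)
qed (rule mult_carrier_mat adj_carrier ptrans_carrier one_carrier_mat)+

lemma T_unitary2: assumes "q > 0" "odd q" shows "ptrans q (UC q) * mat_adjoint (ptrans q (UC q)) = 1\<^sub>m (q*q)"
proof (rule mat_eq_idx[of _ q])
  fix i b i' b' assume h: "i<q" "b<q" "i'<q" "(b'::nat)<q"
  have "(ptrans q (UC q) * mat_adjoint (ptrans q (UC q))) $$ (i*q+b, i'*q+b') =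
     (\<Sum>k<q. \<Sum>x<q. ptrans q (UC q)$$(i*q+b, k*q+x) * cnj (ptrans q (UC q)$$(i'*q+b', k*q+x)))"
    using h by (simp add: mult_adj_idx ptrans_carrier)
  also have "\<dots> = (\<Sum>k<q. \<Sum>x<q. (1/of_nat q) * ((1/of_nat q) * ee q (
       (int i * int x + 2 * int k * int b - (int i * int b + int k * int x)) -
       (int i' * int x + 2 * int k * int b' - (int i' * int b' + int k * int x)))))"
    using h by (intro sum.cong refl) (simp only: lessThan_iff T_idx h pair2)
  also have "\<dots> = (if int q dvd (2 * (int b - int b')) \<and> int q dvd (int i - int i') then ee q (int i' * int b' - int i * int b) else 0)"
    by (rule key_sum[OF assms(1)]) (simp add: algebra_simps)
  also have "\<dots> = 1\<^sub>m (q*q) $$ (i*q+b, i'*q+b')"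
    using h assms by (auto simp: odd_dvd_small dvd_small)
  finally show "(ptrans q (UC q) * mat_adjoint (ptrans q (UC q))) $$ (i*q+b, i'*q+b') = 1\<^sub>m (q*q) $$ (i*q+b, i'*q+b')" .
qed (rule mult_carrier_mat adj_carrier ptrans_carrier one_carrier_mat)+

lemma T_not_unitary: assumes "q > 0" "even q" shows "mat_adjoint (ptrans q (UC q)) * ptrans q (UC q) \<noteq> 1\<^sub>m (q*q)"
proof
  assume eq: "mat_adjoint (ptrans q (UC q)) * ptrans q (UC q) = 1\<^sub>m (q*q)"
  obtain m where m: "q = 2*m" using assms(2) by auto
  have mq: "m < q" "m > 0" using m assms(1) by auto
  have "(mat_adjoint (ptrans q (UC q)) * ptrans q (UC q)) $$ (0*q+0, m*q+0) = 
    (if int q dvd (int 0 - int 0) \<and> int q dvd (2 * (int m - int 0)) then ee q (int 0 * int 0 - int m * int 0) else 0)"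
    by (rule T_gram) (use assms mq in auto)
  also have "\<dots> = 1" using m by simp
  finally have "1\<^sub>m (q*q) $$ (0*q+0, m*q+0) = (1::complex)" using eq by simp
  moreover have "1\<^sub>m (q*q) $$ (0*q+0, m*q+0) = (0::complex)"
    using mq assms(1) by (subst index_one_mat) (auto simp del: idx_lt intro: idx_lt)
  ultimately show False by simp
qed

lemma swap_idx: "x<q \<Longrightarrow> y<q \<Longrightarrow> j<q \<Longrightarrow> b<q \<Longrightarrow>
  swap q $$ (x*q+y, j*q+b) = (if x = b \<and> y = j then 1 else 0)"
  by (auto simp: swap_def)

lemma swap_carrier: "swap q \<in> carrier_mat (q*q) (q*q)" by (simp add: swap_def)

lemma delta2: fixes q :: nat assumes "b<q" "j<q"
  shows "(\<Sum>x<q. \<Sum>y<q. f x y * (if x = b \<and> y = j then 1 else 0)) = (f b j :: complex)"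
proof -
  have "(\<Sum>x<q. \<Sum>y<q. f x y * (if x = b \<and> y = j then 1 else 0)) = (\<Sum>x<q. if x = b then f x j else 0)"
  proof (rule sum.cong[OF refl])
    fix x
    show "(\<Sum>y<q. f x y * (if x = b \<and> y = j then 1 else 0)) = (if x = b then f x j else 0)"
    proof (cases "x = b")
      case True
      have "(\<Sum>y<q. f x y * (if x = b \<and> y = j then 1 else 0)) = (\<Sum>y<q. if y = j then f x y else 0)"
        using True by (intro sum.cong refl) auto
      also have "\<dots> = f x j" using assms(2) by (simp add: sum.delta)
      finally show ?thesis using True by simp
    qed simp
  qed
  also have "\<dots> = f b j" using assms by (simp add: sum.delta)
  finally show ?thesis .
qed

lemma US_idx: assumes "k<q" "a<q" "j<q" "b<q"
  shows "(UC q * swap q) $$ (k*q+a, j*q+b) = UC q $$ (k*q+a, b*q+j)"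
proof -
  have "(UC q * swap q) $$ (k*q+a, j*q+b) = (\<Sum>x<q. \<Sum>y<q. UC q $$ (k*q+a, x*q+y) * swap q $$ (x*q+y, j*q+b))"
    by (rule mult_idx_split[OF UC_carrier swap_carrier]) (use assms idx_lt in blast)+
  also have "\<dots> = (\<Sum>x<q. \<Sum>y<q. UC q $$ (k*q+a, x*q+y) * (if x = b \<and> y = j then 1 else 0))"
    using assms by (intro sum.cong refl) (simp add: swap_idx)
  also have "\<dots> = UC q $$ (k*q+a, b*q+j)" by (rule delta2[OF assms(4,3)])
  finally show ?thesis .
qed

lemma Rs_idx: "k<q \<Longrightarrow> a<q \<Longrightarrow> j<q \<Longrightarrow> i<q \<Longrightarrow>
  realign q (UC q * swap q) $$ (k*q+a, j*q+i) = (1 / of_nat q) * ee q (int i * int a + 2 * int k * int j - (int i * int j + int k * int a))"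
  by (simp only: realign_idx US_idx UC_idx)

definition Mg where "Mg q = realign q (UC q * swap q) * mat_adjoint (realign q (UC q * swap q))"

lemma Mg_carrier: "Mg q \<in> carrier_mat (q*q) (q*q)"
  unfolding Mg_def by (rule mult_carrier_mat adj_carrier realign_carrier)+

lemma Mg_idx: assumes "q > 0" "b<q" "a<q" "b'<q" "(a'::nat)<q"
  shows "Mg q $$ (b*q+a, b'*q+a') =
    (if int q dvd (2 * (int b - int b')) \<and> int q dvd (int a - int a') then ee q (int b' * int a' - int b * int a) else 0)"
proof -
  note h = assms(2-5)
  have "Mg q $$ (b*q+a, b'*q+a') =
     (\<Sum>k<q. \<Sum>x<q. realign q (UC q * swap q)$$(b*q+a, k*q+x) * cnj (realign q (UC q * swap q)$$(b'*q+a', k*q+x)))"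
    unfolding Mg_def using h by (simp add: mult_adj_idx realign_carrier)
  also have "\<dots> = (\<Sum>k<q. \<Sum>x<q. (1/of_nat q) * ((1/of_nat q) * ee q (
       (int x * int a + 2 * int b * int k - (int x * int k + int b * int a)) -
       (int x * int a' + 2 * int b' * int k - (int x * int k + int b' * int a')))))"
    using h by (intro sum.cong refl) (simp only: lessThan_iff Rs_idx h pair2)
  also have "\<dots> = (if int q dvd (2 * (int b - int b')) \<and> int q dvd (int a - int a') then ee q (int b' * int a' - int b * int a) else 0)"
    by (rule key_sum[OF assms(1)]) (simp add: algebra_simps)
  finally show ?thesis .
qed

definition DD :: "nat \<Rightarrow> nat \<Rightarrow> nat \<Rightarrow> bool" where "DD q b k \<longleftrightarrow> int q dvd (2 * (int b - int k))"

lemma DD_sym: "DD q k b = DD q b k"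
proof -
  have "2 * (int k - int b) = - (2 * (int b - int k))" by simp
  thus ?thesis unfolding DD_def by (metis dvd_minus_iff)
qed

lemma Mg_prod: assumes "q > 0" "b<q" "a<q" "k<q" "(x::nat)<q"
  shows "Mg q $$ (b*q+a, k*q+x) * Mg q $$ (k*q+x, b*q+a) = (if DD q b k \<and> a = x then 1 else 0)"
proof -
  have e: "ee q (int k * int x - int b * int a) * ee q (int b * int a - int k * int x) = 1"
    by (simp add: ee_add[symmetric])
  show ?thesis
    unfolding Mg_idx[OF assms] Mg_idx[OF assms(1) assms(4,5,2,3)]
    using DD_sym[of q k b] dvd_small[OF assms(3,5)] dvd_small[OF assms(5,3)] e
    unfolding DD_def by auto
qed

lemma mtrace_one: "mtrace (1\<^sub>m n) = of_nat n" by (simp add: mtrace_def)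

lemma trace_Mg: assumes "q > 0"
  shows "mtrace (Mg q * Mg q) = of_nat q * (\<Sum>b<q. \<Sum>k<q. if DD q b k then 1 else 0)"
proof -
  have "mtrace (Mg q * Mg q) = (\<Sum>r<q*q. (Mg q * Mg q) $$ (r, r))"
    unfolding mtrace_def using Mg_carrier[of q] by simp
  also have "\<dots> = (\<Sum>b<q. \<Sum>a<q. (Mg q * Mg q) $$ (b*q+a, b*q+a))" by (rule sum_split)
  also have "\<dots> = (\<Sum>b<q. \<Sum>a<q. \<Sum>k<q. \<Sum>x<q. if DD q b k \<and> a = x then 1 else 0)"
  proof (intro sum.cong refl)
    fix b a assume ba: "b \<in> {..<q}" "a \<in> {..<q}"
    have "(Mg q * Mg q) $$ (b*q+a, b*q+a) = (\<Sum>k<q. \<Sum>x<q. Mg q $$ (b*q+a, k*q+x) * Mg q $$ (k*q+x, b*q+a))"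
      by (rule mult_idx_split[OF Mg_carrier Mg_carrier]) (use ba idx_lt in auto)
    also have "\<dots> = (\<Sum>k<q. \<Sum>x<q. if DD q b k \<and> a = x then 1 else 0)"
      using ba by (intro sum.cong refl) (simp add: Mg_prod assms)
    finally show "(Mg q * Mg q) $$ (b*q+a, b*q+a) = (\<Sum>k<q. \<Sum>x<q. if DD q b k \<and> a = x then 1 else 0)" .
  qed
  also have "\<dots> = (\<Sum>b<q. \<Sum>a<q. \<Sum>k<q. if DD q b k then 1 else 0)"
  proof (intro sum.cong refl)
    fix b a k assume "a \<in> {..<q}"
    thus "(\<Sum>x<q. if DD q b k \<and> a = x then 1 else 0) = (if DD q b k then 1 else (0::complex))"
      by (cases "DD q b k") (simp_all add: sum.delta)
  qed
  also have "\<dots> = of_nat q * (\<Sum>b<q. \<Sum>k<q. if DD q b k then 1 else 0)"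
    by (simp add: sum_distrib_left)
  finally show ?thesis .
qed

lemma count_odd: assumes "odd q" "b < q" shows "(\<Sum>k<q. if DD q b k then 1 else 0) = (1::complex)"
proof -
  have "(\<Sum>k<q. if DD q b k then 1 else (0::complex)) = (\<Sum>k<q. if k = b then 1 else 0)"
  proof (intro sum.cong refl)
    fix k assume "k \<in> {..<q}"
    hence "int q dvd (int b - int k) \<longleftrightarrow> b = k" using dvd_small[OF assms(2)] by simp
    moreover have "DD q b k \<longleftrightarrow> int q dvd (int b - int k)" unfolding DD_def by (rule odd_dvd2[OF assms(1)])
    ultimately have "DD q b k \<longleftrightarrow> b = k" by simp
    thus "(if DD q b k then 1 else (0::complex)) = (if k = b then 1 else 0)" by auto
  qed
  also have "\<dots> = 1" using assms(2) by (simp add: sum.delta)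
  finally show ?thesis .
qed

lemma count_even: assumes "q = 2*m" "m > 0" "b < q" shows "(\<Sum>k<q. if DD q b k then 1 else 0) = (2::complex)"
proof -
  have dd: "DD q b k \<longleftrightarrow> int m dvd (int b - int k)" for k
    unfolding DD_def assms(1) using dvd_times_left_cancel_iff[of 2 "int m" "int b - int k"] by simp
  have "(\<Sum>k<q. if DD q b k then 1 else (0::complex)) = (\<Sum>s<(2::nat). \<Sum>t<m. if DD q b (s*m+t) then 1 else 0)"
    unfolding assms(1) by (rule sum_split)
  also have "\<dots> = (\<Sum>s<(2::nat). \<Sum>t<m. if t = b mod m then 1 else (0::complex))"
  proof (intro sum.cong refl)
    fix s t assume t: "t \<in> {..<m}"
    have "int b - int (s*m+t) = (int b - int t) + int m * (- int s)" by (simp add: algebra_simps)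
    hence "DD q b (s*m+t) \<longleftrightarrow> int m dvd (int b - int t)" unfolding dd by (metis dvd_add_left_iff dvd_triv_left)
    also have "\<dots> \<longleftrightarrow> int b mod int m = int t mod int m" by (simp add: mod_eq_dvd_iff)
    also have "\<dots> \<longleftrightarrow> t = b mod m" using t by (auto simp flip: of_nat_mod)
    finally show "(if DD q b (s*m+t) then 1 else (0::complex)) = (if t = b mod m then 1 else 0)" by simp
  qed
  also have "\<dots> = 2" using assms(2) by (simp add: sum.delta)
  finally show ?thesis .
qed

lemma sum4_rev:
  "(\<Sum>a\<in>A. \<Sum>b\<in>B. \<Sum>c\<in>C. \<Sum>d\<in>D. f a b c d) = (\<Sum>d\<in>D. \<Sum>c\<in>C. \<Sum>b\<in>B. \<Sum>a\<in>A. f a b c d)"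
proof -
  have "(\<Sum>a\<in>A. \<Sum>b\<in>B. \<Sum>c\<in>C. \<Sum>d\<in>D. f a b c d) = (\<Sum>a\<in>A. \<Sum>b\<in>B. \<Sum>d\<in>D. \<Sum>c\<in>C. f a b c d)"
    by (rule sum.cong[OF refl], rule sum.cong[OF refl], rule sum.swap)
  also have "\<dots> = (\<Sum>a\<in>A. \<Sum>d\<in>D. \<Sum>b\<in>B. \<Sum>c\<in>C. f a b c d)"
    by (rule sum.cong[OF refl], rule sum.swap)
  also have "\<dots> = (\<Sum>d\<in>D. \<Sum>a\<in>A. \<Sum>b\<in>B. \<Sum>c\<in>C. f a b c d)"
    by (rule sum.swap)
  also have "\<dots> = (\<Sum>d\<in>D. \<Sum>a\<in>A. \<Sum>c\<in>C. \<Sum>b\<in>B. f a b c d)"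
    by (rule sum.cong[OF refl], rule sum.cong[OF refl], rule sum.swap)
  also have "\<dots> = (\<Sum>d\<in>D. \<Sum>c\<in>C. \<Sum>a\<in>A. \<Sum>b\<in>B. f a b c d)"
    by (rule sum.cong[OF refl], rule sum.swap)
  also have "\<dots> = (\<Sum>d\<in>D. \<Sum>c\<in>C. \<Sum>b\<in>B. \<Sum>a\<in>A. f a b c d)"
    by (rule sum.cong[OF refl], rule sum.cong[OF refl], rule sum.swap)
  finally show ?thesis .
qed

lemma sum4_swap14:
  "(\<Sum>a\<in>A. \<Sum>b\<in>B. \<Sum>c\<in>C. \<Sum>d\<in>D. f a b c d) = (\<Sum>d\<in>D. \<Sum>b\<in>B. \<Sum>c\<in>C. \<Sum>a\<in>A. f a b c d)"
proof -
  have "(\<Sum>a\<in>A. \<Sum>b\<in>B. \<Sum>c\<in>C. \<Sum>d\<in>D. f a b c d) = (\<Sum>d\<in>D. \<Sum>c\<in>C. \<Sum>b\<in>B. \<Sum>a\<in>A. f a b c d)"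
    by (rule sum4_rev)
  also have "\<dots> = (\<Sum>d\<in>D. \<Sum>b\<in>B. \<Sum>c\<in>C. \<Sum>a\<in>A. f a b c d)"
    by (rule sum.cong[OF refl], rule sum.swap)
  finally show ?thesis .
qed

lemma delta1: fixes q :: nat assumes "x' < q"
  shows "(\<Sum>x<q. g x * (if x = x' then c else 0)) = g x' * (c::complex)"
proof -
  have "(\<Sum>x<q. g x * (if x = x' then c else 0)) = (\<Sum>x<q. if x = x' then g x * c else 0)"
    by (intro sum.cong refl) auto
  also have "\<dots> = g x' * c" using assms by simp
  finally show ?thesis .
qed

lemma kl_carrier: "kron_left q a \<in> carrier_mat (q*q) (q*q)" by (simp add: kron_left_def)
lemma kr_carrier: "kron_right q a \<in> carrier_mat (q*q) (q*q)" by (simp add: kron_right_def)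

lemma kl_idx: "k<q \<Longrightarrow> x<q \<Longrightarrow> k'<q \<Longrightarrow> x'<q \<Longrightarrow>
  kron_left q a $$ (k*q+x, k'*q+x') = (if x = x' then a $$ (k,k') else 0)"
  by (simp add: kron_left_def)

lemma kr_idx: "k<q \<Longrightarrow> x<q \<Longrightarrow> k'<q \<Longrightarrow> x'<q \<Longrightarrow>
  kron_right q a $$ (k*q+x, k'*q+x') = (if k = k' then a $$ (x,x') else 0)"
  by (simp add: kron_right_def)

lemma AKL_idx: assumes "r < q*q" "k'<q" "x'<q"
  shows "(mat_adjoint (UC q) * kron_left q a) $$ (r, k'*q+x') = (\<Sum>k<q. cnj (UC q $$ (k*q+x', r)) * a $$ (k,k'))"
proof -
  have "(mat_adjoint (UC q) * kron_left q a) $$ (r, k'*q+x') =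
     (\<Sum>k<q. \<Sum>x<q. mat_adjoint (UC q) $$ (r, k*q+x) * kron_left q a $$ (k*q+x, k'*q+x'))"
    by (rule mult_idx_split[OF adj_carrier[OF UC_carrier] kl_carrier]) (use assms idx_lt in auto)
  also have "\<dots> = (\<Sum>k<q. \<Sum>x<q. cnj (UC q $$ (k*q+x, r)) * (if x = x' then a $$ (k,k') else 0))"
  proof (intro sum.cong refl)
    fix k x assume "k \<in> {..<q}" "x \<in> {..<q}"
    moreover have "dim_row (UC q) = q*q" "dim_col (UC q) = q*q" using UC_carrier by auto
    ultimately show "mat_adjoint (UC q) $$ (r, k*q+x) * kron_left q a $$ (k*q+x, k'*q+x') = cnj (UC q $$ (k*q+x, r)) * (if x = x' then a $$ (k,k') else 0)"
      using assms by (simp add: kl_idx)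
  qed
  also have "\<dots> = (\<Sum>k<q. cnj (UC q $$ (k*q+x', r)) * a $$ (k,k'))"
    by (intro sum.cong refl delta1 assms(3))
  finally show ?thesis .
qed

lemma AKR_idx: assumes "r < q*q" "k'<q" "x'<q"
  shows "(mat_adjoint (UC q) * kron_right q a) $$ (r, k'*q+x') = (\<Sum>x<q. cnj (UC q $$ (k'*q+x, r)) * a $$ (x,x'))"
proof -
  have "(mat_adjoint (UC q) * kron_right q a) $$ (r, k'*q+x') =
     (\<Sum>k<q. \<Sum>x<q. mat_adjoint (UC q) $$ (r, k*q+x) * kron_right q a $$ (k*q+x, k'*q+x'))"
    by (rule mult_idx_split[OF adj_carrier[OF UC_carrier] kr_carrier]) (use assms idx_lt in auto)
  also have "\<dots> = (\<Sum>x<q. \<Sum>k<q. cnj (UC q $$ (k*q+x, r)) * (if k = k' then a $$ (x,x') else 0))"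
    apply (subst sum.swap)
  proof (intro sum.cong refl)
    fix k x assume "k \<in> {..<q}" "x \<in> {..<q}"
    moreover have "dim_row (UC q) = q*q" "dim_col (UC q) = q*q" using UC_carrier by auto
    ultimately show "mat_adjoint (UC q) $$ (r, k*q+x) * kron_right q a $$ (k*q+x, k'*q+x') = cnj (UC q $$ (k*q+x, r)) * (if k = k' then a $$ (x,x') else 0)"
      using assms by (simp add: kr_idx)
  qed
  also have "\<dots> = (\<Sum>x<q. cnj (UC q $$ (k'*q+x, r)) * a $$ (x,x'))"
    by (intro sum.cong refl delta1 assms(2))
  finally show ?thesis .
qed

lemma Gp: assumes "q>0" "odd q" "k<q" "k'<q" "x<q" "y<q"
  shows "(\<Sum>\<alpha><q. \<Sum>i<q. cnj (UC q$$(k*q+\<alpha>, i*q+x)) * UC q$$(k'*q+\<alpha>, i*q+y)) = (if k' = k \<and> y = x then 1 else 0)"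
proof -
  have "(\<Sum>\<alpha><q. \<Sum>i<q. cnj (UC q$$(k*q+\<alpha>, i*q+x)) * UC q$$(k'*q+\<alpha>, i*q+y)) =
    (\<Sum>\<alpha><q. \<Sum>i<q. (1/of_nat q) * ((1/of_nat q) * ee q (
       (int k' * int \<alpha> + 2 * int i * int y - (int k' * int y + int i * int \<alpha>)) -
       (int k * int \<alpha> + 2 * int i * int x - (int k * int x + int i * int \<alpha>)))))"
    using assms by (intro sum.cong refl) (simp only: lessThan_iff UC_idx pair1)
  also have "\<dots> = (if int q dvd (int k' - int k) \<and> int q dvd (2 * (int y - int x)) then ee q (int k * int x - int k' * int y) else 0)"
    by (rule key_sum[OF assms(1)]) (simp add: algebra_simps)
  also have "\<dots> = (if k' = k \<and> y = x then 1 else 0)"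
    using assms by (auto simp: odd_dvd_small dvd_small)
  finally show ?thesis .
qed

lemma Gm: assumes "q>0" "odd q" "\<alpha><q" "\<alpha>'<q" "i<q" "j<q"
  shows "(\<Sum>k<q. \<Sum>x<q. cnj (UC q$$(k*q+\<alpha>, i*q+x)) * UC q$$(k*q+\<alpha>', j*q+x)) = (if \<alpha>' = \<alpha> \<and> j = i then 1 else 0)"
proof -
  have "(\<Sum>k<q. \<Sum>x<q. cnj (UC q$$(k*q+\<alpha>, i*q+x)) * UC q$$(k*q+\<alpha>', j*q+x)) =
    (\<Sum>k<q. \<Sum>x<q. (1/of_nat q) * ((1/of_nat q) * ee q (
       (int k * int \<alpha>' + 2 * int j * int x - (int k * int x + int j * int \<alpha>')) -
       (int k * int \<alpha> + 2 * int i * int x - (int k * int x + int i * int \<alpha>)))))"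
    using assms by (intro sum.cong refl) (simp only: lessThan_iff UC_idx pair1)
  also have "\<dots> = (if int q dvd (int \<alpha>' - int \<alpha>) \<and> int q dvd (2 * (int j - int i)) then ee q (int i * int \<alpha> - int j * int \<alpha>') else 0)"
    by (rule key_sum[OF assms(1)]) (simp add: algebra_simps)
  also have "\<dots> = (if \<alpha>' = \<alpha> \<and> j = i then 1 else 0)"
    using assms by (auto simp: odd_dvd_small dvd_small)
  finally show ?thesis .
qed

lemma AKL_carrier: "mat_adjoint (UC q) * kron_left q a \<in> carrier_mat (q*q) (q*q)"
  by (rule mult_carrier_mat adj_carrier UC_carrier kl_carrier)+
lemma AKR_carrier: "mat_adjoint (UC q) * kron_right q a \<in> carrier_mat (q*q) (q*q)"
  by (rule mult_carrier_mat adj_carrier UC_carrier kr_carrier)+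

lemma ptrace1_UC: assumes "q>0" "odd q" "a \<in> carrier_mat q q"
  shows "ptrace1 q (mat_adjoint (UC q) * kron_left q a * UC q) = mtrace a \<cdot>\<^sub>m 1\<^sub>m q"
proof (rule eq_matI)
  fix x y assume "x < dim_row (mtrace a \<cdot>\<^sub>m 1\<^sub>m q)" "y < dim_col (mtrace a \<cdot>\<^sub>m 1\<^sub>m q)"
  hence xy: "x < q" "y < q" by auto
  let ?X = "mat_adjoint (UC q) * kron_left q a * UC q"
  have "ptrace1 q ?X $$ (x,y) = (\<Sum>i<q. ?X $$ (i*q+x, i*q+y))"
    unfolding ptrace1_def using xy by simp
  also have "\<dots> = (\<Sum>i<q. \<Sum>k'<q. \<Sum>\<alpha><q. \<Sum>k<q. cnj (UC q $$ (k*q+\<alpha>, i*q+x)) * a $$ (k,k') * UC q$$(k'*q+\<alpha>, i*q+y))"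
  proof (rule sum.cong[OF refl])
    fix i assume "i \<in> {..<q}"
    hence i: "i < q" by simp
    have "?X $$ (i*q+x, i*q+y) = (\<Sum>k'<q. \<Sum>\<alpha><q. (mat_adjoint (UC q) * kron_left q a) $$ (i*q+x, k'*q+\<alpha>) * UC q$$(k'*q+\<alpha>, i*q+y))"
      by (rule mult_idx_split[OF AKL_carrier UC_carrier]) (use i xy idx_lt in auto)
    also have "\<dots> = (\<Sum>k'<q. \<Sum>\<alpha><q. (\<Sum>k<q. cnj (UC q $$ (k*q+\<alpha>, i*q+x)) * a $$ (k,k')) * UC q$$(k'*q+\<alpha>, i*q+y))"
      using i xy by (intro sum.cong refl) (simp add: AKL_idx)
    also have "\<dots> = (\<Sum>k'<q. \<Sum>\<alpha><q. \<Sum>k<q. cnj (UC q $$ (k*q+\<alpha>, i*q+x)) * a $$ (k,k') * UC q$$(k'*q+\<alpha>, i*q+y))"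
      by (simp add: sum_distrib_right)
    finally show "?X $$ (i*q+x, i*q+y) = (\<Sum>k'<q. \<Sum>\<alpha><q. \<Sum>k<q. cnj (UC q $$ (k*q+\<alpha>, i*q+x)) * a $$ (k,k') * UC q$$(k'*q+\<alpha>, i*q+y))" .
  qed
  also have "\<dots> = (\<Sum>k<q. \<Sum>k'<q. \<Sum>\<alpha><q. \<Sum>i<q. cnj (UC q $$ (k*q+\<alpha>, i*q+x)) * a $$ (k,k') * UC q$$(k'*q+\<alpha>, i*q+y))"
    by (rule sum4_swap14)
  also have "\<dots> = (\<Sum>k<q. \<Sum>k'<q. a $$ (k,k') * (\<Sum>\<alpha><q. \<Sum>i<q. cnj (UC q $$ (k*q+\<alpha>, i*q+x)) * UC q$$(k'*q+\<alpha>, i*q+y)))"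
    by (simp add: sum_distrib_left mult_ac)
  also have "\<dots> = (\<Sum>k<q. \<Sum>k'<q. a $$ (k,k') * (if k' = k \<and> y = x then 1 else 0))"
    using assms xy by (intro sum.cong refl) (simp add: Gp)
  also have "\<dots> = (\<Sum>k<q. if y = x then a $$ (k,k) else 0)"
  proof (rule sum.cong[OF refl])
    fix k assume "k \<in> {..<q}"
    thus "(\<Sum>k'<q. a $$ (k,k') * (if k' = k \<and> y = x then 1 else 0)) = (if y = x then a $$ (k,k) else 0)"
      by (cases "y = x") (simp_all add: delta1)
  qed
  also have "\<dots> = (mtrace a \<cdot>\<^sub>m 1\<^sub>m q) $$ (x,y)"
    using xy assms(3) by (auto simp: mtrace_def)
  finally show "ptrace1 q ?X $$ (x,y) = (mtrace a \<cdot>\<^sub>m 1\<^sub>m q) $$ (x,y)" .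
qed (auto simp: ptrace1_def)

lemma ptrace2_UC: assumes "q>0" "odd q" "a \<in> carrier_mat q q"
  shows "ptrace2 q (mat_adjoint (UC q) * kron_right q a * UC q) = mtrace a \<cdot>\<^sub>m 1\<^sub>m q"
proof (rule eq_matI)
  fix i j assume "i < dim_row (mtrace a \<cdot>\<^sub>m 1\<^sub>m q)" "j < dim_col (mtrace a \<cdot>\<^sub>m 1\<^sub>m q)"
  hence ij: "i < q" "j < q" by auto
  let ?X = "mat_adjoint (UC q) * kron_right q a * UC q"
  have "ptrace2 q ?X $$ (i,j) = (\<Sum>x<q. ?X $$ (i*q+x, j*q+x))"
    unfolding ptrace2_def using ij by simp
  also have "\<dots> = (\<Sum>x<q. \<Sum>k<q. \<Sum>\<alpha>'<q. \<Sum>\<alpha><q. cnj (UC q $$ (k*q+\<alpha>, i*q+x)) * a $$ (\<alpha>,\<alpha>') * UC q$$(k*q+\<alpha>', j*q+x))"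
  proof (rule sum.cong[OF refl])
    fix x assume "x \<in> {..<q}"
    hence x: "x < q" by simp
    have "?X $$ (i*q+x, j*q+x) = (\<Sum>k<q. \<Sum>\<alpha>'<q. (mat_adjoint (UC q) * kron_right q a) $$ (i*q+x, k*q+\<alpha>') * UC q$$(k*q+\<alpha>', j*q+x))"
      by (rule mult_idx_split[OF AKR_carrier UC_carrier]) (use x ij idx_lt in auto)
    also have "\<dots> = (\<Sum>k<q. \<Sum>\<alpha>'<q. (\<Sum>\<alpha><q. cnj (UC q $$ (k*q+\<alpha>, i*q+x)) * a $$ (\<alpha>,\<alpha>')) * UC q$$(k*q+\<alpha>', j*q+x))"
      using x ij by (intro sum.cong refl) (simp add: AKR_idx)
    also have "\<dots> = (\<Sum>k<q. \<Sum>\<alpha>'<q. \<Sum>\<alpha><q. cnj (UC q $$ (k*q+\<alpha>, i*q+x)) * a $$ (\<alpha>,\<alpha>') * UC q$$(k*q+\<alpha>', j*q+x))"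
      by (simp add: sum_distrib_right)
    finally show "?X $$ (i*q+x, j*q+x) = (\<Sum>k<q. \<Sum>\<alpha>'<q. \<Sum>\<alpha><q. cnj (UC q $$ (k*q+\<alpha>, i*q+x)) * a $$ (\<alpha>,\<alpha>') * UC q$$(k*q+\<alpha>', j*q+x))" .
  qed
  also have "\<dots> = (\<Sum>\<alpha><q. \<Sum>\<alpha>'<q. \<Sum>k<q. \<Sum>x<q. cnj (UC q $$ (k*q+\<alpha>, i*q+x)) * a $$ (\<alpha>,\<alpha>') * UC q$$(k*q+\<alpha>', j*q+x))"
    by (rule sum4_rev)
  also have "\<dots> = (\<Sum>\<alpha><q. \<Sum>\<alpha>'<q. a $$ (\<alpha>,\<alpha>') * (\<Sum>k<q. \<Sum>x<q. cnj (UC q $$ (k*q+\<alpha>, i*q+x)) * UC q$$(k*q+\<alpha>', j*q+x)))"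
    by (simp add: sum_distrib_left mult_ac)
  also have "\<dots> = (\<Sum>\<alpha><q. \<Sum>\<alpha>'<q. a $$ (\<alpha>,\<alpha>') * (if \<alpha>' = \<alpha> \<and> j = i then 1 else 0))"
    using assms ij by (intro sum.cong refl) (simp add: Gm)
  also have "\<dots> = (\<Sum>\<alpha><q. if j = i then a $$ (\<alpha>,\<alpha>) else 0)"
  proof (rule sum.cong[OF refl])
    fix \<alpha> assume "\<alpha> \<in> {..<q}"
    thus "(\<Sum>\<alpha>'<q. a $$ (\<alpha>,\<alpha>') * (if \<alpha>' = \<alpha> \<and> j = i then 1 else 0)) = (if j = i then a $$ (\<alpha>,\<alpha>) else 0)"
      by (cases "j = i") (simp_all add: delta1)
  qed
  also have "\<dots> = (mtrace a \<cdot>\<^sub>m 1\<^sub>m q) $$ (i,j)"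
    using ij assms(3) by (auto simp: mtrace_def)
  finally show "ptrace2 q ?X $$ (i,j) = (mtrace a \<cdot>\<^sub>m 1\<^sub>m q) $$ (i,j)" .
qed (auto simp: ptrace2_def)

lemma eig_zero: assumes "\<And>a. a \<in> carrier_mat q q \<Longrightarrow> mtrace a = 0 \<Longrightarrow> M a = 0\<^sub>m q q"
  and "nontrivial_eigenvalue q M l" shows "l = 0"
proof -
  obtain a where a: "a \<in> carrier_mat q q" "a \<noteq> 0\<^sub>m q q" "mtrace a = 0" "M a = l \<cdot>\<^sub>m a"
    using assms(2) unfolding nontrivial_eigenvalue_def by blast
  have "l \<cdot>\<^sub>m a = 0\<^sub>m q q" using a assms(1) by simp
  moreover obtain i j where ij: "i < q" "j < q" "a $$ (i,j) \<noteq> 0"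
  proof -
    { assume "\<forall>i<q. \<forall>j<q. a $$ (i,j) = 0"
      hence "a = 0\<^sub>m q q" using a(1) by (intro eq_matI) auto
      with a(2) have False by simp }
    thus ?thesis using that by blast
  qed
  ultimately have "(l \<cdot>\<^sub>m a) $$ (i,j) = 0" by simp
  hence "l * a $$ (i,j) = 0" using ij a(1) by simp
  thus ?thesis using ij by simp
qed

lemma EU: assumes "q > 0" shows "ent_power q (UC q) = 1 - of_nat q * of_nat q / of_nat q ^ 4"
proof -
  have "realign q (UC q) * mat_adjoint (realign q (UC q)) = 1\<^sub>m (q*q)" by (rule R_unitary2[OF assms])
  moreover have "1\<^sub>m (q*q) * 1\<^sub>m (q*q) = (1\<^sub>m (q*q) :: complex mat)" by simp
  ultimately show ?thesis unfolding ent_power_def Let_def by (simp add: mtrace_one)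
qed

lemma EUS: assumes "q > 0" shows "ent_power q (UC q * swap q) = 1 - of_nat q * (\<Sum>b<q. \<Sum>k<q. if DD q b k then 1 else 0) / of_nat q ^ 4"
  unfolding ent_power_def Let_def Mg_def[symmetric] trace_Mg[OF assms] by simp

lemma Q2: assumes "q \<ge> 2" shows "(of_nat q :: complex) ^ 2 \<noteq> 1" "(of_nat q :: complex) \<noteq> 0"
proof -
  have "q^2 \<ge> 2^2" using assms by (intro power_mono) auto
  hence "q^2 \<noteq> 1" by auto
  hence "(of_nat (q^2) :: complex) \<noteq> of_nat 1" by (metis of_nat_eq_iff)
  thus "(of_nat q :: complex) ^ 2 \<noteq> 1" by simp
  show "(of_nat q :: complex) \<noteq> 0" using assms by simp
qed

theorem mainTheorem7:
  fixes q :: nat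
  assumes "q \<ge> 2"
  shows "unitary_mat (q*q) (UC q) \<and> dual_unitary q (UC q)
    \<and> (odd q \<longrightarrow> two_unitary q (UC q) \<and> ep q (UC q) = 1
          \<and> (\<forall>l. nontrivial_eigenvalue q (Mplus q (UC q)) l \<longrightarrow> l = 0)
          \<and> (\<forall>l. nontrivial_eigenvalue q (Mminus q (UC q)) l \<longrightarrow> l = 0))
    \<and> (even q \<longrightarrow> \<not> two_unitary q (UC q)
          \<and> ep q (UC q) = (of_nat q ^ 2 - 2) / (of_nat q ^ 2 - 1))"
proof -
  have q0: "q > 0" using assms by simp
  have U: "unitary_mat (q*q) (UC q)"
    unfolding unitary_mat_def using UC_carrier U_unitary1[OF q0] U_unitary2[OF q0] by blast
  have R: "unitary_mat (q*q) (realign q (UC q))"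
    unfolding unitary_mat_def using realign_carrier R_unitary1[OF q0] R_unitary2[OF q0] by blast
  have DU: "dual_unitary q (UC q)" unfolding dual_unitary_def using U R by blast
  note QQ = Q2[OF assms]
  have odd_part: "two_unitary q (UC q) \<and> ep q (UC q) = 1
          \<and> (\<forall>l. nontrivial_eigenvalue q (Mplus q (UC q)) l \<longrightarrow> l = 0)
          \<and> (\<forall>l. nontrivial_eigenvalue q (Mminus q (UC q)) l \<longrightarrow> l = 0)" if oq: "odd q"
  proof (intro conjI allI impI)
    have T: "unitary_mat (q*q) (ptrans q (UC q))"
      unfolding unitary_mat_def using ptrans_carrier T_unitary1[OF q0 oq] T_unitary2[OF q0 oq] by blast
    show "two_unitary q (UC q)" unfolding two_unitary_def using U R T by blast
    have cnt: "(\<Sum>b<q. \<Sum>k<q. if DD q b k then 1 else 0) = (of_nat q :: complex)"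
      using count_odd[OF oq] by simp
    have E2: "ent_power q (UC q * swap q) = 1 - of_nat q * of_nat q / of_nat q ^ 4"
      unfolding EUS[OF q0] cnt ..
    show "ep q (UC q) = 1"
      unfolding ep_def EU[OF q0] E2 ent_power_swap_def using QQ
      by (simp add: field_simps power2_eq_square power4_eq_xxxx)
  next
    fix l assume "nontrivial_eigenvalue q (Mplus q (UC q)) l"
    then show "l = 0"
    proof (rule eig_zero[rotated])
      fix a :: "complex mat" assume "a \<in> carrier_mat q q" "mtrace a = 0"
      thus "Mplus q (UC q) a = 0\<^sub>m q q" unfolding Mplus_def ptrace1_UC[OF q0 oq \<open>a \<in> carrier_mat q q\<close>]
        by (auto intro!: eq_matI)
    qed
  next
    fix l assume "nontrivial_eigenvalue q (Mminus q (UC q)) l"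
    then show "l = 0"
    proof (rule eig_zero[rotated])
      fix a :: "complex mat" assume "a \<in> carrier_mat q q" "mtrace a = 0"
      thus "Mminus q (UC q) a = 0\<^sub>m q q" unfolding Mminus_def ptrace2_UC[OF q0 oq \<open>a \<in> carrier_mat q q\<close>]
        by (auto intro!: eq_matI)
    qed
  qed
  have even_part: "\<not> two_unitary q (UC q) \<and> ep q (UC q) = (of_nat q ^ 2 - 2) / (of_nat q ^ 2 - 1)" if eq: "even q"
  proof
    show "\<not> two_unitary q (UC q)"
      unfolding two_unitary_def unitary_mat_def using T_not_unitary[OF q0 eq] by blast
    obtain m where m: "q = 2*m" using eq by auto
    have m0: "m > 0" using m q0 by simp
    have cnt: "(\<Sum>b<q. \<Sum>k<q. if DD q b k then 1 else 0) = 2 * (of_nat q :: complex)"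
      using count_even[OF m m0] by simp
    have E2: "ent_power q (UC q * swap q) = 1 - of_nat q * (2 * of_nat q) / of_nat q ^ 4"
      unfolding EUS[OF q0] cnt ..
    have "(of_nat q :: complex) ^ 2 - 1 \<noteq> 0" using QQ by simp
    then show "ep q (UC q) = (of_nat q ^ 2 - 2) / (of_nat q ^ 2 - 1)"
      unfolding ep_def EU[OF q0] E2 ent_power_swap_def using QQ
      by (simp add: field_simps power2_eq_square power4_eq_xxxx)
  qed
  show ?thesis using U DU odd_part even_part by blast
qed

end
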